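(* Let $n \geq 1$ and $d \geq 0$ be integers. If $F$ is a graph with maximum degree at most $d$ on at least $dn + 2^n$ vertices, then the complement of $F$ contains a copy of $Q_n$. As a consequence, $r(Q_n, K_3) \leq 2^n(n+1)$ for every $n \geq 1$.
   Context: The hypercube $Q_n$ is the graph on vertex set $\{0,1\}^n$ in which two vertices are adjacent if and only if they differ in exactly one coordinate. For graphs $G,H$, $r(G,H)$ is the smallest $N$ such that every red/blue edge-coloring of $K_N$ contains a red copy of $G$ or a blue copy of $H$. *)

theory Defs
  imports Main
begin

text \<open>Simple graphs are given by a vertex set V and an edge relation E
  (assumed symmetric and irreflexive where relevant); only edges inside V matter.\<close>

definition hypercube_verts :: "nat \<Rightarrow> bool list set" where
  "hypercube_verts n = {x. length x = n}"

definition hypercube_adj :: "nat \<Rightarrow> bool list \<Rightarrow> bool list \<Rightarrow> bool" where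
  "hypercube_adj n x y \<longleftrightarrow> card {i. i < n \<and> x ! i \<noteq> y ! i} = 1"

definition has_copy ::
  "'a set \<Rightarrow> ('a \<Rightarrow> 'a \<Rightarrow> bool) \<Rightarrow> 'b set \<Rightarrow> ('b \<Rightarrow> 'b \<Rightarrow> bool) \<Rightarrow> bool" where
  "has_copy VG EG V E \<longleftrightarrow>
     (\<exists>f. inj_on f VG \<and> f ` VG \<subseteq> V \<and>
          (\<forall>u\<in>VG. \<forall>v\<in>VG. EG u v \<longrightarrow> E (f u) (f v)))"

definition max_degree_le :: "'a set \<Rightarrow> ('a \<Rightarrow> 'a \<Rightarrow> bool) \<Rightarrow> nat \<Rightarrow> bool" where
  "max_degree_le V E d \<longleftrightarrow> (\<forall>v\<in>V. card {u\<in>V. E v u} \<le> d)"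

definition compl_edges :: "('a \<Rightarrow> 'a \<Rightarrow> bool) \<Rightarrow> 'a \<Rightarrow> 'a \<Rightarrow> bool" where
  "compl_edges E u v \<longleftrightarrow> u \<noteq> v \<and> \<not> E u v"

text \<open>Red/blue colouring of K_N on vertex set {0..<N}: c u v = True means red.\<close>
definition ramsey_prop ::
  "'a set \<Rightarrow> ('a \<Rightarrow> 'a \<Rightarrow> bool) \<Rightarrow> 'b set \<Rightarrow> ('b \<Rightarrow> 'b \<Rightarrow> bool) \<Rightarrow> nat \<Rightarrow> bool" where
  "ramsey_prop VG EG VH EH N \<longleftrightarrow>
     (\<forall>c :: nat \<Rightarrow> nat \<Rightarrow> bool. (\<forall>u v. c u v = c v u) \<longrightarrow>
        has_copy VG EG {0..<N} (\<lambda>u v. u \<noteq> v \<and> c u v) \<or>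
        has_copy VH EH {0..<N} (\<lambda>u v. u \<noteq> v \<and> \<not> c u v))"

definition ramsey_number ::
  "'a set \<Rightarrow> ('a \<Rightarrow> 'a \<Rightarrow> bool) \<Rightarrow> 'b set \<Rightarrow> ('b \<Rightarrow> 'b \<Rightarrow> bool) \<Rightarrow> nat" where
  "ramsey_number VG EG VH EH = (LEAST N. ramsey_prop VG EG VH EH N)"

definition K3_verts :: "nat set" where "K3_verts = {0, 1, 2}"
definition K3_adj :: "nat \<Rightarrow> nat \<Rightarrow> bool" where "K3_adj u v \<longleftrightarrow> u \<noteq> v"

end

theory Submission
  imports Defs
begin

lemma greedy:
  fixes VG :: "'b set" and V :: "'a set"
  assumes "finite S" "S \<subseteq> VG" "finite VG" "finite V"
   "\<forall>x\<in>VG. card {y\<in>VG. EG x y \<or> EG y x} \<le> n"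
   "\<forall>x. \<not> EG x x" "\<forall>u v. E u v \<longrightarrow> E v u" "max_degree_le V E d"
   "card V \<ge> d*n + card VG"
  shows "\<exists>f. inj_on f S \<and> f`S \<subseteq> V \<and> (\<forall>u\<in>S. \<forall>v\<in>S. EG u v \<longrightarrow> compl_edges E (f u) (f v))"
  using assms(1,2)
proof (induction S rule: finite_induct)
  case empty show ?case by auto
next
  case (insert x S)
  then obtain f where f: "inj_on f S" "f`S \<subseteq> V"
    "\<forall>u\<in>S. \<forall>v\<in>S. EG u v \<longrightarrow> compl_edges E (f u) (f v)" by auto
  define N where "N = {y\<in>S. EG x y \<or> EG y x}"
  define B where "B = f`S \<union> (\<Union>y\<in>N. {u\<in>V. E (f y) u})"
  have xVG: "x \<in> VG" using insert by auto
  have finN: "finite N" using insert(1) N_def by auto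
  have "N \<subseteq> {y\<in>VG. EG x y \<or> EG y x}" using insert N_def by auto
  hence cN: "card N \<le> n" using assms(3,5) xVG card_mono[of "{y\<in>VG. EG x y \<or> EG y x}" N]
    by fastforce
  have "card (\<Union>y\<in>N. {u\<in>V. E (f y) u}) \<le> (\<Sum>y\<in>N. card {u\<in>V. E (f y) u})"
    by (rule card_UN_le) (rule finN)
  also have "\<dots> \<le> (\<Sum>y\<in>N. d)"
  proof (rule sum_mono)
    fix y assume "y \<in> N"
    hence "f y \<in> V" using f(2) N_def by auto
    thus "card {u\<in>V. E (f y) u} \<le> d" using assms(8) unfolding max_degree_le_def by auto
  qed
  also have "\<dots> = card N * d" by simp
  also have "\<dots> \<le> n * d" using cN by simp
  finally have c1: "card (\<Union>y\<in>N. {u\<in>V. E (f y) u}) \<le> n * d" .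
  have c2: "card (f`S) \<le> card S" by (rule card_image_le) (rule insert(1))
  have "card (insert x S) \<le> card VG" using insert(4) assms(3) card_mono by blast
  hence c3: "card S < card VG" using insert(1,2) by simp
  have "card B \<le> card (f`S) + card (\<Union>y\<in>N. {u\<in>V. E (f y) u})"
    unfolding B_def by (rule card_Un_le)
  hence "card B < card V" using c1 c2 c3 assms(9) by (simp add: mult.commute)
  moreover have "finite B" unfolding B_def using insert(1) finN assms(4) by auto
  ultimately have "\<not> V \<subseteq> B" using card_mono[of B V] by linarith
  then obtain z where z: "z \<in> V" "z \<notin> B" by blast
  let ?g = "f(x:=z)"
  have "inj_on ?g (insert x S)"
    using f(1) z insert(2) unfolding inj_on_def B_def by auto
  moreover have "?g ` insert x S \<subseteq> V" using f(2) z insert(2) by auto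
  moreover have "\<forall>u\<in>insert x S. \<forall>v\<in>insert x S. EG u v \<longrightarrow> compl_edges E (?g u) (?g v)"
  proof (intro ballI impI)
    fix u v assume u: "u \<in> insert x S" and v: "v \<in> insert x S" and e: "EG u v"
    show "compl_edges E (?g u) (?g v)"
    proof (cases "u = x")
      case True
      then have "v \<noteq> x" using e assms(6) by auto
      with v have "v \<in> S" by auto
      hence "v \<in> N" using N_def e True by auto
      hence "\<not> E (f v) z" using z unfolding B_def by auto
      hence "\<not> E z (f v)" using assms(7) by blast
      moreover have "z \<noteq> f v" using z \<open>v \<in> S\<close> unfolding B_def by auto
      ultimately show ?thesis using True \<open>v \<noteq> x\<close> unfolding compl_edges_def by auto
    next
      case False
      with u have uS: "u \<in> S" by auto
      show ?thesis
      proof (cases "v = x")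
        case True
        hence "u \<in> N" using N_def e uS by auto
        hence "\<not> E (f u) z" using z unfolding B_def by auto
        moreover have "z \<noteq> f u" using z uS unfolding B_def by auto
        ultimately show ?thesis using True False unfolding compl_edges_def by auto
      next
        case False2: False
        with v have "v \<in> S" by auto
        thus ?thesis using f(3) uS e False False2 by auto
      qed
    qed
  qed
  ultimately show ?case by blast
qed

lemma hc_fin: "finite (hypercube_verts n)" and hc_card: "card (hypercube_verts n) = 2 ^ n"
proof -
  have e: "hypercube_verts n = {xs. set xs \<subseteq> (UNIV::bool set) \<and> length xs = n}"
    unfolding hypercube_verts_def by auto
  show "finite (hypercube_verts n)" unfolding e by (rule finite_lists_length_eq) simp
  show "card (hypercube_verts n) = 2 ^ n" unfolding e by (subst card_lists_length_eq) auto
qed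

lemma hc_sym: "hypercube_adj n x y = hypercube_adj n y x"
  unfolding hypercube_adj_def by (simp add: eq_commute)

lemma hc_irrefl: "\<not> hypercube_adj n x x"
  unfolding hypercube_adj_def by simp

lemma hc_nb: "y \<in> hypercube_verts n \<Longrightarrow> x \<in> hypercube_verts n \<Longrightarrow> hypercube_adj n x y
   \<Longrightarrow> y \<in> (\<lambda>i. x[i := \<not> x!i]) ` {..<n}"
proof -
  assume y: "y \<in> hypercube_verts n" and x: "x \<in> hypercube_verts n" and a: "hypercube_adj n x y"
  from a obtain i where i: "{i. i < n \<and> x ! i \<noteq> y ! i} = {i}"
    unfolding hypercube_adj_def by (meson card_1_singletonE)
  hence "i < n" by auto
  have "y = x[i := \<not> x!i]"
  proof (rule nth_equalityI)
    show "length y = length (x[i := \<not> x ! i])" using x y unfolding hypercube_verts_def by simp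
    fix j assume "j < length y"
    hence j: "j < n" using y unfolding hypercube_verts_def by simp
    show "y ! j = x[i := \<not> x ! i] ! j"
    proof (cases "j = i")
      case True
      then have "x ! j \<noteq> y ! j" using i by auto
      then show ?thesis using True j x unfolding hypercube_verts_def by auto
    next
      case False
      then have "x ! j = y ! j" using i j by auto
      then show ?thesis using False by simp
    qed
  qed
  thus ?thesis using \<open>i < n\<close> by auto
qed

lemma hc_deg: "x \<in> hypercube_verts n \<Longrightarrow>
   card {y\<in>hypercube_verts n. hypercube_adj n x y \<or> hypercube_adj n y x} \<le> n"
proof -
  assume x: "x \<in> hypercube_verts n"
  have "{y\<in>hypercube_verts n. hypercube_adj n x y \<or> hypercube_adj n y x}
      \<subseteq> (\<lambda>i. x[i := \<not> x!i]) ` {..<n}" using hc_nb[OF _ x] hc_sym by blast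
  hence "card {y\<in>hypercube_verts n. hypercube_adj n x y \<or> hypercube_adj n y x}
      \<le> card ((\<lambda>i. x[i := \<not> x!i]) ` {..<n})" by (intro card_mono) auto
  also have "\<dots> \<le> n" using card_image_le[of "{..<n}"] by auto
  finally show ?thesis .
qed

lemma part1:
  fixes V :: "'a set"
  assumes "finite V" "\<forall>u v. E u v \<longrightarrow> E v u" "max_degree_le V E d" "card V \<ge> d * n + 2 ^ n"
  shows "has_copy (hypercube_verts n) (hypercube_adj n) V (compl_edges E)"
proof -
  have "\<exists>f. inj_on f (hypercube_verts n) \<and> f`(hypercube_verts n) \<subseteq> V \<and>
     (\<forall>u\<in>hypercube_verts n. \<forall>v\<in>hypercube_verts n. hypercube_adj n u v \<longrightarrow> compl_edges E (f u) (f v))"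
    by (rule greedy[where n=n and d=d]) (use assms hc_fin hc_card hc_deg hc_irrefl in auto)
  thus ?thesis unfolding has_copy_def by blast
qed

theorem mainTheorem5:
  shows "(\<forall>(n::nat) (d::nat) (V::'a set) (E::'a \<Rightarrow> 'a \<Rightarrow> bool).
            n \<ge> 1 \<longrightarrow> finite V \<longrightarrow>
            (\<forall>u v. E u v \<longrightarrow> E v u) \<longrightarrow> (\<forall>v. \<not> E v v) \<longrightarrow>
            max_degree_le V E d \<longrightarrow> card V \<ge> d * n + 2 ^ n \<longrightarrow>
            has_copy (hypercube_verts n) (hypercube_adj n) V (compl_edges E))
       \<and> (\<forall>n::nat. n \<ge> 1 \<longrightarrow>
            ramsey_number (hypercube_verts n) (hypercube_adj n) K3_verts K3_adj
              \<le> 2 ^ n * (n + 1))"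
proof (intro conjI allI impI)
  fix n d :: nat and V :: "'a set" and E
  assume "finite V" "\<forall>u v. E u v \<longrightarrow> E v u" "max_degree_le V E d" "card V \<ge> d * n + 2 ^ n"
  thus "has_copy (hypercube_verts n) (hypercube_adj n) V (compl_edges E)" by (rule part1)
next
  fix n :: nat assume "n \<ge> 1"
  define N where "N = 2 ^ n * (n + 1)"
  have "ramsey_prop (hypercube_verts n) (hypercube_adj n) K3_verts K3_adj N"
    unfolding ramsey_prop_def
  proof (intro allI impI)
    fix c :: "nat \<Rightarrow> nat \<Rightarrow> bool" assume cs: "\<forall>u v. c u v = c v u"
    let ?R = "\<lambda>u v. u \<noteq> v \<and> c u v"
    let ?B = "\<lambda>u v. u \<noteq> v \<and> \<not> c u v"
    show "has_copy (hypercube_verts n) (hypercube_adj n) {0..<N} ?R \<or>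
          has_copy K3_verts K3_adj {0..<N} ?B"
    proof (cases "\<exists>a\<in>{0..<N}. \<exists>b\<in>{0..<N}. \<exists>e\<in>{0..<N}. ?B a b \<and> ?B a e \<and> ?B b e")
      case True
      then obtain a b e where abe: "a \<in> {0..<N}" "b \<in> {0..<N}" "e \<in> {0..<N}" "?B a b" "?B a e" "?B b e"
        by blast
      let ?f = "\<lambda>i::nat. if i = 0 then a else if i = 1 then b else e"
      have "inj_on ?f K3_verts" using abe unfolding inj_on_def K3_verts_def by auto
      moreover have "?f ` K3_verts \<subseteq> {0..<N}" using abe unfolding K3_verts_def by auto
      moreover have "\<forall>u\<in>K3_verts. \<forall>v\<in>K3_verts. K3_adj u v \<longrightarrow> ?B (?f u) (?f v)"
        using abe cs unfolding K3_verts_def K3_adj_def by auto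
      ultimately show ?thesis unfolding has_copy_def by blast
    next
      case False
      note noT = False
      show ?thesis
      proof (cases "\<exists>v\<in>{0..<N}. card {u\<in>{0..<N}. ?B v u} \<ge> 2 ^ n")
        case True
        then obtain v where v: "v \<in> {0..<N}" and cW: "card {u\<in>{0..<N}. ?B v u} \<ge> 2 ^ n" by blast
        define W where "W = {u\<in>{0..<N}. ?B v u}"
        have "finite W" unfolding W_def by auto
        then obtain f where f: "f ` hypercube_verts n \<subseteq> W" "inj_on f (hypercube_verts n)"
          using card_le_inj[OF hc_fin, of W n] cW hc_card unfolding W_def by auto
        have "\<forall>u\<in>hypercube_verts n. \<forall>w\<in>hypercube_verts n. hypercube_adj n u w \<longrightarrow> ?R (f u) (f w)"
        proof (intro ballI impI)
          fix u w assume u: "u \<in> hypercube_verts n" and w: "w \<in> hypercube_verts n"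
            and a: "hypercube_adj n u w"
          have "u \<noteq> w" using a hc_irrefl by auto
          hence ne: "f u \<noteq> f w" using f(2) u w unfolding inj_on_def by auto
          have "f u \<in> W" "f w \<in> W" using f(1) u w by auto
          thus "?R (f u) (f w)" using ne noT v unfolding W_def by blast
        qed
        hence "has_copy (hypercube_verts n) (hypercube_adj n) {0..<N} ?R"
          using f unfolding has_copy_def W_def by blast
        thus ?thesis by blast
      next
        case False
        have md: "max_degree_le {0..<N} ?B (2 ^ n - 1)"
          unfolding max_degree_le_def using False by (auto simp: not_le)
        have "(2 ^ n - 1) * n + 2 ^ n \<le> card {0..<N}"
        proof -
          have "(2 ^ n - 1) * n \<le> (2::nat) ^ n * n" by simp
          thus ?thesis unfolding N_def by (simp add: algebra_simps)
        qed
        hence "has_copy (hypercube_verts n) (hypercube_adj n) {0..<N} (compl_edges ?B)"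
          by (intro part1[OF _ _ md]) (use cs in auto)
        moreover have "compl_edges ?B = ?R" unfolding compl_edges_def by (intro ext) auto
        ultimately show ?thesis by simp
      qed
    qed
  qed
  thus "ramsey_number (hypercube_verts n) (hypercube_adj n) K3_verts K3_adj \<le> 2 ^ n * (n + 1)"
    unfolding ramsey_number_def N_def by (rule Least_le)
qed

end
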